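(* Let $I=[0,1]$, let $k\in\mathbb N\cup\{0,\infty\}$, and let $C^{(k)}(I)$ be the space of $k$-times continuously differentiable scalar-valued functions on $I$. Let $\{T_n\}_{n\in\mathbb N}$ be a sequence of positive linear maps $T_n:C^{(k)}(I)\to C(I)$. (i) If $T_ng\to g$ pointwise on $I$ for each $g\in\{1,x,x^2\}$, then $T_nf\to f$ pointwise on $I$ for every $f\in C^{(k)}(I)$. (ii) If $T_ng\to g$ uniformly on $I$ for each $g\in\{1,x,x^2\}$, then $T_nf\to f$ uniformly on $I$ for every $f\in C^{(k)}(I)$.
   Context: $C(I)$ is the space of continuous scalar-valued (real or complex) functions on $I$, with the same scalar field as $C^{(k)}(I)$. A linear map $T$ is positive if $Tf\ge0$ whenever $f\ge0$. Here $x$ and $x^2$ denote the functions $t\mapsto t$ and $t\mapsto t^2$. *)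

theory Defs
  imports "HOL-Analysis.Analysis" "HOL-Library.Extended_Nat"
begin

abbreviation unitI :: "real set" where "unitI \<equiv> {0..1}"

text \<open>C^(k)(I) for k in N u {infinity} (k :: enat): f is k-times continuously
  differentiable on [0,1] (one-sided derivatives at the endpoints).  D j is the
  j-th derivative; D 0 = f.\<close>
definition Ck :: "enat \<Rightarrow> (real \<Rightarrow> 'a::real_normed_vector) \<Rightarrow> bool" where
  "Ck k f \<longleftrightarrow> (\<exists>D. D 0 = f \<and>
      (\<forall>j. enat j < k \<longrightarrow>
         (\<forall>x\<in>unitI. (D j has_vector_derivative D (Suc j) x) (at x within unitI))) \<and>
      (\<forall>j. enat j \<le> k \<longrightarrow> continuous_on unitI (D j)))"

definition nonneg_scalar :: "'a::real_normed_algebra_1 \<Rightarrow> bool" where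
  "nonneg_scalar z \<longleftrightarrow> (\<exists>r::real. r \<ge> 0 \<and> z = of_real r)"

text \<open>T is a positive linear map C^(k)(I) -> C(I); functions are compared on I only.\<close>
definition pos_lin_map :: "enat \<Rightarrow> ((real \<Rightarrow> 'a::real_normed_field) \<Rightarrow> real \<Rightarrow> 'a) \<Rightarrow> bool" where
  "pos_lin_map k T \<longleftrightarrow>
     (\<forall>f g. Ck k f \<longrightarrow> Ck k g \<longrightarrow> (\<forall>x\<in>unitI. f x = g x) \<longrightarrow> (\<forall>x\<in>unitI. T f x = T g x)) \<and>
     (\<forall>f. Ck k f \<longrightarrow> continuous_on unitI (T f)) \<and>
     (\<forall>f g. Ck k f \<longrightarrow> Ck k g \<longrightarrow> (\<forall>x\<in>unitI. T (\<lambda>t. f t + g t) x = T f x + T g x)) \<and>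
     (\<forall>f c. Ck k f \<longrightarrow> (\<forall>x\<in>unitI. T (\<lambda>t. c * f t) x = c * T f x)) \<and>
     (\<forall>f. Ck k f \<longrightarrow> (\<forall>x\<in>unitI. nonneg_scalar (f x)) \<longrightarrow> (\<forall>x\<in>unitI. nonneg_scalar (T f x)))"

definition test_funs :: "(real \<Rightarrow> 'a::real_normed_field) set" where
  "test_funs = {(\<lambda>t. 1), (\<lambda>t. of_real t), (\<lambda>t. of_real (t ^ 2))}"

end

theory Submission
  imports Defs
begin


datatype 'a cpx = Cpx (cre: 'a) (cim: 'a)

instantiation cpx :: (comm_ring_1) comm_ring_1
begin
definition "0 = Cpx 0 0"
definition "1 = Cpx 1 0"
definition "x + y = Cpx (cre x + cre y) (cim x + cim y)"
definition "x - y = Cpx (cre x - cre y) (cim x - cim y)"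
definition "- x = Cpx (- cre x) (- cim x)"
definition "x * y = Cpx (cre x * cre y - cim x * cim y) (cre x * cim y + cim x * cre y)"
instance
  by standard (auto simp: zero_cpx_def one_cpx_def plus_cpx_def minus_cpx_def
      uminus_cpx_def times_cpx_def cpx.expand algebra_simps)
end

definition emb :: "complex \<Rightarrow> 'a::real_normed_field cpx" where
  "emb c = Cpx (of_real (Re c)) (of_real (Im c))"

lemma emb_mult: "emb (c * d) = (emb c * emb d :: 'a::real_normed_field cpx)"
  by (simp add: emb_def times_cpx_def of_real_mult of_real_diff of_real_add)

lemma emb_uminus: "emb (- c) = - (emb c :: 'a::real_normed_field cpx)"
  by (simp add: emb_def uminus_cpx_def)

lemma csqrt_sq_cases: "csqrt (c^2) = c \<or> csqrt (c^2) = - c"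
proof -
  have "(csqrt (c^2) - c) * (csqrt (c^2) + c) = 0"
    by (simp add: algebra_simps power2_eq_square[symmetric])
  then show ?thesis by (auto simp: eq_neg_iff_add_eq_0)
qed

lemma factor2:
  fixes W :: "'a::real_normed_field cpx"
  shows "\<exists>rs. c \<in> set rs \<and> (\<forall>r\<in>set rs. cmod r = cmod c) \<and> length rs = 2^m \<and>
     prod_list (map (\<lambda>r. W - emb r) rs) = W^(2^m) - emb (c^(2^m))"
proof (induction m arbitrary: W c)
  case 0
  then show ?case by (intro exI[of _ "[c]"]) auto
next
  case (Suc m)
  from Suc.IH[where W="W^2" and c="c^2"] obtain rs where rs: "c^2 \<in> set rs"
    "\<forall>r\<in>set rs. cmod r = cmod (c^2)" "length rs = 2^m"
    "prod_list (map (\<lambda>r. W^2 - emb r) rs) = (W^2)^(2^m) - emb ((c^2)^(2^m))" by blast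
  define rs' where "rs' = concat (map (\<lambda>r. [csqrt r, - csqrt r]) rs)"
  have c1: "c \<in> set rs'" using rs(1) csqrt_sq_cases[of c] unfolding rs'_def by force
  have c2: "\<forall>r\<in>set rs'. cmod r = cmod c" using rs(2) unfolding rs'_def
    by (auto simp: norm_power real_sqrt_abs)
  have "length rs' = 2 * length rs" unfolding rs'_def
    by (induction rs) auto
  hence c3: "length rs' = 2^Suc m" using rs(3) by simp
  have key: "\<And>r. (W - emb (csqrt r)) * (W - emb (- csqrt r)) = W^2 - emb r"
  proof -
    fix r
    have "(W - emb (csqrt r)) * (W - emb (- csqrt r)) = W^2 - emb (csqrt r * csqrt r)"
      by (simp add: emb_mult emb_uminus algebra_simps power2_eq_square)
    also have "csqrt r * csqrt r = r" by (simp add: power2_eq_square[symmetric])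
    finally show "(W - emb (csqrt r)) * (W - emb (- csqrt r)) = W^2 - emb r" .
  qed
  have "prod_list (map (\<lambda>r. W - emb r) rs') = prod_list (map (\<lambda>r. W^2 - emb r) rs)"
    unfolding rs'_def by (induction rs) (auto simp: key[symmetric] mult.assoc)
  also have "\<dots> = W^(2^Suc m) - emb (c^(2^Suc m))"
    using rs(4) by (simp add: power_mult[symmetric] mult.commute)
  finally show ?case using c1 c2 c3 by blast
qed

definition nf :: "'a::comm_ring_1 cpx \<Rightarrow> 'a" where "nf w = cre w ^ 2 + cim w ^ 2"

lemma nf_mult: "nf (x * y) = nf x * nf y"
  by (simp add: nf_def times_cpx_def power2_eq_square algebra_simps)

lemma nf_one: "nf 1 = 1" by (simp add: nf_def one_cpx_def)

lemma nf_prod_list: "nf (prod_list xs) = prod_list (map nf xs)"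
  by (induction xs) (auto simp: nf_mult nf_one)

lemma nf_power: "nf (x ^ n) = nf x ^ n"
  by (induction n) (auto simp: nf_mult nf_one)

definition n1 :: "'a::real_normed_field cpx \<Rightarrow> real" where "n1 w = norm (cre w) + norm (cim w)"

lemma n1_mult: "n1 (x * y) \<le> n1 x * n1 y"
proof -
  have "norm (cre x * cre y - cim x * cim y) \<le> norm (cre x) * norm (cre y) + norm (cim x) * norm (cim y)"
    using norm_triangle_ineq4[of "cre x * cre y" "cim x * cim y"] by (simp add: norm_mult)
  moreover have "norm (cre x * cim y + cim x * cre y) \<le> norm (cre x) * norm (cim y) + norm (cim x) * norm (cre y)"
    using norm_triangle_ineq[of "cre x * cim y" "cim x * cre y"] by (simp add: norm_mult)
  ultimately show ?thesis by (simp add: n1_def times_cpx_def algebra_simps)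
qed

lemma n1_nonneg: "n1 x \<ge> 0" by (simp add: n1_def)

lemma n1_power: "n1 (x ^ n) \<le> n1 x ^ n"
proof (induction n)
  case 0 then show ?case by (simp add: n1_def one_cpx_def)
next
  case (Suc n)
  have "n1 (x ^ Suc n) \<le> n1 x * n1 (x ^ n)" by (simp add: n1_mult)
  also have "\<dots> \<le> n1 x * n1 x ^ n" using Suc by (simp add: mult_left_mono n1_nonneg)
  finally show ?case by simp
qed

lemma prod_list_ge_pow:
  fixes xs :: "real list"
  assumes "\<forall>x\<in>set xs. x \<ge> m" "m \<ge> 0"
  shows "prod_list xs \<ge> m ^ length xs"
  using assms
proof (induction xs)
  case (Cons x xs)
  then have "m * m ^ length xs \<le> x * prod_list xs"
    by (intro mult_mono) auto
  then show ?case by simp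
qed simp

lemma norm_prod_list': "norm (prod_list (xs :: 'a::real_normed_div_algebra list)) = prod_list (map norm xs)"
  by (induction xs) (auto simp: norm_mult)

lemma prod_list_map_remove1':
  fixes g :: "'b \<Rightarrow> 'a::comm_monoid_mult"
  shows "x \<in> set xs \<Longrightarrow> prod_list (map g xs) = g x * prod_list (map g (remove1 x xs))"
  by (induction xs) (auto simp: mult_ac)

lemma quad_root:
  fixes z :: "'a::real_normed_field"
  shows "\<exists>s t. (z - of_real s)^2 + of_real t^2 = 0"
proof (rule ccontr)
  assume nz: "\<not> ?thesis"
  define h where "h = (\<lambda>p::real\<times>real. norm ((z - of_real (fst p))^2 + of_real (snd p)^2))"
  have hpos: "h p > 0" for p using nz by (auto simp: h_def)
  have hcont: "continuous_on A h" for A unfolding h_def by (intro continuous_intros)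
  have coer: "h p \<ge> fst p^2 + snd p^2 - 2*\<bar>fst p\<bar>*norm z - norm z^2" for p
  proof -
    obtain s t where p: "p = (s,t)" by fastforce
    have eq: "(z - of_real s)^2 + of_real t^2 = of_real (s^2+t^2) - (2 * of_real s * z - z^2)"
      by (simp add: power2_eq_square algebra_simps)
    have i1: "norm (2 * of_real s * z - z^2) \<le> 2*\<bar>s\<bar>*norm z + norm z^2"
      using norm_triangle_ineq4[of "2 * of_real s * z" "z^2"] by (simp add: norm_mult norm_power)
    have i2: "norm (of_real (s^2+t^2) - (2 * of_real s * z - z^2)) \<ge> \<bar>s^2+t^2\<bar> - norm (2 * of_real s * z - z^2)"
      using norm_triangle_ineq2[of "of_real (s^2+t^2) :: 'a" "2 * of_real s * z - z^2"]
      by (simp only: norm_of_real)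
    have hp: "h p = norm ((z - of_real s)^2 + of_real t^2)" by (simp add: h_def p)
    also have "\<dots> = norm (of_real (s^2+t^2) - (2 * of_real s * z - z^2))" by (simp only: eq)
    finally have hp2: "h p = norm (of_real (s^2+t^2) - (2 * of_real s * z - z^2))" .
    have "\<bar>s^2+t^2\<bar> = s^2+t^2" by simp
    then show ?thesis using i1 i2 hp2 by (simp only: p fst_conv snd_conv)
  qed
  define R0 where "R0 = h (0,0)"
  define K where "K = {p. h p \<le> R0}"
  have Kc: "closed K" unfolding K_def by (intro closed_Collect_le hcont continuous_on_const)
  have Kb: "bounded K"
  proof -
    have "norm p \<le> sqrt (2*R0 + 6*norm z^2)" if "p \<in> K" for p
    proof -
      obtain s t where p: "p = (s,t)" by fastforce
      have "h p \<le> R0" using that by (simp add: K_def)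
      with coer[of p] have a: "s^2 + t^2 - 2*\<bar>s\<bar>*norm z - norm z^2 \<le> R0" by (simp add: p)
      have "2*\<bar>s\<bar>*norm z \<le> s^2/2 + 2*norm z^2"
        using sum_squares_ge_zero[of "\<bar>s\<bar> - 2*norm z" 0] by (simp add: power2_eq_square algebra_simps)
      with a zero_le_power2[of t] have "s^2+t^2 \<le> 2*R0 + 6*norm z^2" by linarith
      then show ?thesis by (simp add: p norm_Pair)
    qed
    then show ?thesis unfolding bounded_iff by blast
  qed
  have Kcomp: "compact K" using Kc Kb compact_eq_bounded_closed by blast
  have K0: "(0,0) \<in> K" by (simp add: K_def R0_def)
  obtain p1 where p1: "p1 \<in> K" "\<forall>p\<in>K. h p1 \<le> h p"
    using continuous_attains_inf[OF Kcomp _ hcont] K0 by blast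
  define m where "m = h p1"
  have mle: "m \<le> h p" for p
  proof (cases "p \<in> K")
    case False
    then have "h p > R0" by (simp add: K_def)
    moreover have "m \<le> R0" using p1 K0 by (auto simp: m_def R0_def)
    ultimately show ?thesis by simp
  qed (use p1 in \<open>auto simp: m_def\<close>)
  have mpos: "m > 0" using hpos by (simp add: m_def)
  define S where "S = K \<inter> {p. h p = m}"
  have Scomp: "compact S" unfolding S_def
    by (intro compact_Int_closed Kcomp closed_Collect_eq hcont continuous_on_const)
  have p1S: "p1 \<in> S" using p1 by (simp add: S_def m_def)
  obtain p0 where p0: "p0 \<in> S" "\<forall>p\<in>S. fst p \<le> fst p0"
    using continuous_attains_sup[OF Scomp _ continuous_on_fst[OF continuous_on_id]] p1S by blast
  obtain s0 t0 where p0e: "p0 = (s0,t0)" by fastforce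
  have hm: "h (s0,t0) = m" using p0 p0e by (simp add: S_def)
  define W :: "'a cpx" where "W = Cpx (z - of_real s0) (of_real (-t0))"
  have nfW: "norm (nf (W - emb r)) = h (s0 + Re r, t0 + Im r)" for r
  proof -
    have "nf (W - emb r) = (z - of_real (s0 + Re r))^2 + of_real ((t0 + Im r)^2)"
      by (simp add: W_def emb_def nf_def minus_cpx_def power2_eq_square algebra_simps)
    then show ?thesis by (simp add: h_def)
  qed
  have nfW0: "norm (nf W) = m" using nfW[of 0] hm by (simp add: emb_def zero_cpx_def[symmetric])
  define C where "C = n1 W"
  have C0: "C \<ge> 0" by (simp add: C_def n1_nonneg)
  define a where "a = min 1 (m / (2*(C+1)))"
  have apos: "a > 0" using mpos C0 by (simp add: a_def)
  have aC: "a * C < m"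
  proof -
    have "a \<le> m / (2*(C+1))" by (simp add: a_def)
    then have "a * C \<le> m / (2*(C+1)) * C" using C0 by (rule mult_right_mono)
    also have "\<dots> < m" using mpos C0 by (simp add: field_simps add_nonneg_pos)
    finally show ?thesis .
  qed
  have a2: "a^2 < m"
  proof -
    have "a \<le> 1" "a \<le> m / (2*(C+1))" by (auto simp: a_def)
    have "m / (2*(C+1)) \<le> m/2" using mpos C0 by (intro divide_left_mono) auto
    have "a^2 \<le> a" using \<open>a \<le> 1\<close> apos by (simp add: power2_eq_square mult_le_cancel_left1)
    with \<open>a \<le> m / (2*(C+1))\<close> \<open>m / (2*(C+1)) \<le> m/2\<close> mpos show ?thesis by linarith
  qed
  define x where "x = h (s0 + a, t0)"
  have main: "x * m^(2^j - 1) \<le> m^(2^j) + 2*(a*C)^(2^j) + (a^2)^(2^j)" for j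
  proof -
    define N :: nat where "N = 2^j"
    obtain rs where rs: "complex_of_real a \<in> set rs" "\<forall>r\<in>set rs. cmod r = cmod (complex_of_real a)"
      "length rs = N" "prod_list (map (\<lambda>r. W - emb r) rs) = W^N - emb (complex_of_real a ^ N)"
      using factor2[where c="complex_of_real a" and W=W and m=j] unfolding N_def by blast
    define g where "g = (\<lambda>r. norm (nf (W - emb r)))"
    have "norm (nf (prod_list (map (\<lambda>r. W - emb r) rs))) = prod_list (map g rs)"
      by (simp add: nf_prod_list norm_prod_list' g_def o_def)
    also have "prod_list (map g rs) = g (complex_of_real a) * prod_list (map g (remove1 (complex_of_real a) rs))"
      using rs(1) by (simp add: prod_list_map_remove1')
    also have "\<dots> \<ge> x * m^(N-1)"
    proof -
      have "g (complex_of_real a) = x" by (simp add: g_def nfW x_def)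
      moreover have "prod_list (map g (remove1 (complex_of_real a) rs)) \<ge> m ^ (N-1)"
      proof -
        have "prod_list (map g (remove1 (complex_of_real a) rs)) \<ge> m ^ length (map g (remove1 (complex_of_real a) rs))"
          by (rule prod_list_ge_pow) (use mpos mle in \<open>auto simp: g_def nfW\<close>)
        moreover have "length (map g (remove1 (complex_of_real a) rs)) = N - 1"
          using rs(1,3) by (simp add: length_remove1)
        ultimately show ?thesis by simp
      qed
      moreover have "x \<ge> 0" by (simp add: x_def h_def)
      ultimately show ?thesis by (simp add: mult_left_mono)
    qed
    finally have lhs: "x * m^(N-1) \<le> norm (nf (W^N - emb (complex_of_real a ^ N)))" using rs(4) by simp
    define P where "P = cre (W^N)"
    define Q where "Q = cim (W^N)"
    have "nf (W^N - emb (complex_of_real a ^ N)) = nf (W^N) - 2 * of_real (a^N) * P + of_real ((a^N)^2)"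
    proof -
      have "W^N = Cpx P Q" by (simp add: P_def Q_def)
      moreover have "emb (complex_of_real a ^ N) = (Cpx (of_real (a^N)) 0 :: 'a cpx)"
        by (simp add: emb_def of_real_power[symmetric] del: of_real_power)
      ultimately show ?thesis
        by (simp add: nf_def minus_cpx_def power2_eq_square algebra_simps)
    qed
    also have "norm \<dots> \<le> norm (nf (W^N)) + norm (2 * of_real (a^N) * P) + norm (of_real ((a^N)^2) :: 'a)"
      using norm_triangle_ineq4[of "nf (W^N)" "2 * of_real (a^N) * P"]
        norm_triangle_ineq[of "nf (W^N) - 2 * of_real (a^N) * P" "of_real ((a^N)^2) :: 'a"] by linarith
    also have "norm (nf (W^N)) = m^N" by (simp add: nf_power norm_power nfW0)
    also have "norm (2 * of_real (a^N) * P) = 2 * a^N * norm P" using apos by (simp add: norm_mult norm_power)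
    also have "norm (of_real ((a^N)^2) :: 'a) = (a^2)^N" using apos by (simp add: power2_eq_square norm_mult norm_power power_mult_distrib)
    also have "2 * a^N * norm P \<le> 2 * (a*C)^N"
    proof -
      have "norm P \<le> n1 (W^N)" by (simp add: P_def n1_def)
      also have "\<dots> \<le> C^N" by (simp add: C_def n1_power)
      finally show ?thesis using apos by (simp add: power_mult_distrib mult_left_mono)
    qed
    finally show ?thesis using lhs unfolding N_def by linarith
  qed
  define q1 where "q1 = a*C/m"
  define q2 where "q2 = a^2/m"
  have q1: "0 \<le> q1" "q1 < 1" using aC mpos C0 apos by (auto simp: q1_def)
  have q2: "0 \<le> q2" "q2 < 1" using a2 mpos by (auto simp: q2_def)
  have bound: "x \<le> m + 2*m*q1^j + m*q2^j" for j
  proof -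
    define N :: nat where "N = 2^j"
    have N1: "N = Suc (N - 1)" by (simp add: N_def)
    have "x * m^(N-1) \<le> m * m^(N-1) + 2*(m*q1)^N + (m*q2)^N"
      using main[of j] mpos unfolding N_def[symmetric] q1_def q2_def
      by (subst (asm) N1, subst (2) N1) simp
    also have "\<dots> = (m + 2*m*q1^N + m*q2^N) * m^(N-1)"
    proof -
      have mN: "m^N = m * m^(N-1)" using N1 by (metis power_Suc)
      show ?thesis by (simp add: power_mult_distrib mN algebra_simps)
    qed
    finally have "x \<le> m + 2*m*q1^N + m*q2^N" using mpos by simp
    moreover have "q1^N \<le> q1^j" "q2^N \<le> q2^j" using q1 q2 unfolding N_def
      by (auto intro!: power_decreasing less_imp_le[OF less_exp])
    moreover have "2*m*q1^N \<le> 2*m*q1^j" "m*q2^N \<le> m*q2^j"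
      using calculation(2,3) mpos by (auto intro: mult_left_mono)
    ultimately show ?thesis by linarith
  qed
  have lim: "(\<lambda>j. m + 2*m*q1^j + m*q2^j) \<longlonglongrightarrow> m + 2*m*0 + m*0"
    using q1 q2 by (intro tendsto_intros LIMSEQ_power_zero) auto
  have "x \<le> m" using LIMSEQ_le_const[OF lim] bound by simp
  then have "x = m" using mle[of "(s0 + a, t0)"] by (simp add: x_def)
  then have "(s0 + a, t0) \<in> S" using mle[of p1] p1 by (auto simp: S_def K_def x_def m_def)
  with p0 p0e have "s0 + a \<le> s0" by auto
  with apos show False by simp
qed



lemma CkE:
  assumes "Ck k f"
  obtains D where "D 0 = f"
    "\<And>j x. enat j < k \<Longrightarrow> x \<in> unitI \<Longrightarrow> (D j has_vector_derivative D (Suc j) x) (at x within unitI)"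
    "\<And>j. enat j \<le> k \<Longrightarrow> continuous_on unitI (D j)"
  using assms unfolding Ck_def by blast

lemma CkI:
  assumes "D 0 = f"
    "\<And>j x. enat j < k \<Longrightarrow> x \<in> unitI \<Longrightarrow> (D j has_vector_derivative D (Suc j) x) (at x within unitI)"
    "\<And>j. enat j \<le> k \<Longrightarrow> continuous_on unitI (D j)"
  shows "Ck k f"
  using assms unfolding Ck_def by blast

lemma Ck_add:
  assumes "Ck k f" "Ck k g"
  shows "Ck k (\<lambda>t. f t + g t)"
proof -
  obtain D where D: "D 0 = f"
    "\<And>j x. enat j < k \<Longrightarrow> x \<in> unitI \<Longrightarrow> (D j has_vector_derivative D (Suc j) x) (at x within unitI)"
    "\<And>j. enat j \<le> k \<Longrightarrow> continuous_on unitI (D j)" using CkE[OF assms(1)] by blast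
  obtain E where E: "E 0 = g"
    "\<And>j x. enat j < k \<Longrightarrow> x \<in> unitI \<Longrightarrow> (E j has_vector_derivative E (Suc j) x) (at x within unitI)"
    "\<And>j. enat j \<le> k \<Longrightarrow> continuous_on unitI (E j)" using CkE[OF assms(2)] by blast
  show ?thesis
    by (rule CkI[of "\<lambda>j x. D j x + E j x"])
      (auto simp: D(1) E(1) intro!: has_vector_derivative_add D(2) E(2) continuous_on_add D(3) E(3))
qed

lemma Ck_bl:
  assumes "bounded_linear \<phi>" "Ck k f"
  shows "Ck k (\<lambda>t. \<phi> (f t))"
proof -
  obtain D where D: "D 0 = f"
    "\<And>j x. enat j < k \<Longrightarrow> x \<in> unitI \<Longrightarrow> (D j has_vector_derivative D (Suc j) x) (at x within unitI)"
    "\<And>j. enat j \<le> k \<Longrightarrow> continuous_on unitI (D j)" using CkE[OF assms(2)] by blast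
  show ?thesis
    by (rule CkI[of "\<lambda>j x. \<phi> (D j x)"])
      (auto simp: D(1) intro!: bounded_linear.has_vector_derivative[OF assms(1)] D(2)
        bounded_linear.continuous_on[OF assms(1)] D(3))
qed

lemma Ck_cmult:
  fixes f :: "real \<Rightarrow> 'a::real_normed_field"
  assumes "Ck k f"
  shows "Ck k (\<lambda>t. c * f t)"
  using Ck_bl[OF bounded_linear_mult_right assms] .

lemma Ck_smooth:
  assumes "D 0 = f" "\<And>j x. (D j has_vector_derivative D (Suc j) x) (at x)"
  shows "Ck k f"
proof (rule CkI[of D])
  show "(D j has_vector_derivative D (Suc j) x) (at x within unitI)" for j x
    using assms(2) by (rule has_vector_derivative_at_within)
  then show "continuous_on unitI (D j)" for j
    by (intro continuous_on_vector_derivative) auto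
qed (rule assms(1))

lemma Ck_const: "Ck k (\<lambda>t. c :: 'a::real_normed_field)"
  by (rule Ck_smooth[of "\<lambda>j t. if j = 0 then c else 0"]) auto

lemma Ck_x: "Ck k (\<lambda>t. of_real t :: 'a::real_normed_field)"
proof (rule Ck_smooth[of "\<lambda>j t. if j = 0 then of_real t else if j = 1 then 1 else 0"])
  fix j x
  show "((\<lambda>t. if j = 0 then of_real t :: 'a else if j = 1 then 1 else 0) has_vector_derivative
      (if Suc j = 0 then of_real x else if Suc j = 1 then 1 else 0)) (at x)"
  proof (cases "j = 0")
    case True
    have "((\<lambda>t. of_real t :: 'a) has_vector_derivative of_real 1) (at x)"
      by (rule has_vector_derivative_of_real) (rule DERIV_ident)
    then show ?thesis using True by simp
  qed auto
qed auto

lemma Ck_x2: "Ck k (\<lambda>t. of_real (t^2) :: 'a::real_normed_field)"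
proof (rule Ck_smooth[of "\<lambda>j t. if j = 0 then of_real (t^2) else if j = 1 then 2 * of_real t
     else if j = 2 then 2 else 0"])
  fix j x
  show "((\<lambda>t. if j = 0 then of_real (t^2) :: 'a else if j = 1 then 2 * of_real t else if j = 2 then 2 else 0)
     has_vector_derivative (if Suc j = 0 then of_real (x^2) else if Suc j = 1 then 2 * of_real x
       else if Suc j = 2 then 2 else 0)) (at x)"
  proof (cases "j = 0")
    case True
    have "((\<lambda>t. t^2) has_field_derivative 2 * x) (at x)"
      by (auto intro!: derivative_eq_intros)
    then have "((\<lambda>t. of_real (t^2) :: 'a) has_vector_derivative of_real (2 * x)) (at x)"
      by (rule has_vector_derivative_of_real)
    then show ?thesis using True by simp
  next
    case False
    show ?thesis
    proof (cases "j = 1")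
      case True
      have "((\<lambda>t. 2 * of_real t :: 'a) has_vector_derivative 2 * of_real 1) (at x)"
        by (rule has_vector_derivative_mult_right, rule has_vector_derivative_of_real) (rule DERIV_ident)
      then show ?thesis using True by simp
    qed (use False in auto)
  qed
qed auto


lemma Ck_cont:
  assumes "Ck k f"
  shows "continuous_on unitI f"
proof -
  obtain D where "D 0 = f" "\<And>j. enat j \<le> k \<Longrightarrow> continuous_on unitI (D j)"
    using CkE[OF assms] by metis
  then show ?thesis using \<open>D 0 = f\<close> by (auto simp: zero_enat_def[symmetric])
qed

lemma Ck_real_cont:
  assumes "Ck k (\<lambda>t. of_real (u t) :: 'a::real_normed_field)"
  shows "continuous_on unitI u"
  unfolding continuous_on_iff
proof (intro ballI allI impI)
  fix x e :: real assume xe: "x \<in> unitI" "0 < e"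
  have c: "continuous_on unitI (\<lambda>t. of_real (u t) :: 'a)" by (rule Ck_cont[OF assms])
  obtain d where d: "d > 0" "\<forall>x'\<in>unitI. dist x' x < d \<longrightarrow> dist (of_real (u x') :: 'a) (of_real (u x)) < e"
    using c xe unfolding continuous_on_iff by blast
  have "\<forall>x'\<in>unitI. dist x' x < d \<longrightarrow> dist (u x') (u x) < e"
    using d(2) unfolding dist_of_real .
  then show "\<exists>d>0. \<forall>x'\<in>unitI. dist x' x < d \<longrightarrow> dist (u x') (u x) < e" using d(1) by blast
qed

lemma real_bounded:
  assumes "continuous_on unitI (u :: real \<Rightarrow> real)"
  obtains M where "M \<ge> 0" "\<And>t. t \<in> unitI \<Longrightarrow> \<bar>u t\<bar> \<le> M"
proof -
  have c: "compact (u ` unitI)" by (rule compact_continuous_image[OF assms compact_Icc])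
  obtain M where M: "\<forall>y\<in>u ` unitI. norm y \<le> M"
    using bounded_iff[THEN iffD1, OF compact_imp_bounded[OF c]] by (elim exE)
  have "\<bar>u t\<bar> \<le> max M 0" if "t \<in> unitI" for t
  proof -
    have "u t \<in> u ` unitI" using that by (rule imageI)
    then have "norm (u t) \<le> M" by (rule bspec[OF M])
    then show ?thesis by simp
  qed
  then show ?thesis by (intro that[of "max M 0"]) auto
qed

context
  fixes T :: "(real \<Rightarrow> 'a::real_normed_field) \<Rightarrow> real \<Rightarrow> 'a" and k x
  assumes PL: "pos_lin_map k T" and xI: "x \<in> unitI"
begin

lemma PL_add: "Ck k f \<Longrightarrow> Ck k g \<Longrightarrow> T (\<lambda>t. f t + g t) x = T f x + T g x"
  using PL xI unfolding pos_lin_map_def by blast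

lemma PL_mult: "Ck k f \<Longrightarrow> T (\<lambda>t. c * f t) x = c * T f x"
  using PL xI unfolding pos_lin_map_def by blast

lemma PL_pos: "Ck k f \<Longrightarrow> (\<forall>t\<in>unitI. nonneg_scalar (f t)) \<Longrightarrow> nonneg_scalar (T f x)"
  using PL xI unfolding pos_lin_map_def by blast

lemma PL_ext: "Ck k f \<Longrightarrow> Ck k g \<Longrightarrow> (\<forall>t\<in>unitI. f t = g t) \<Longrightarrow> T f x = T g x"
  using PL xI unfolding pos_lin_map_def by blast

lemma PL_const: "T (\<lambda>t. a) x = a * T (\<lambda>t. 1) x"
proof -
  have "T (\<lambda>t. a * 1) x = a * T (\<lambda>t. 1) x" by (rule PL_mult[OF Ck_const])
  then show ?thesis by simp
qed

lemma Ck_comb: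
  fixes f :: "real \<Rightarrow> 'a"
  assumes "Ck k f"
  shows "Ck k (\<lambda>t. a + b * of_real t + c * of_real (t^2) + d * f t)"
  by (intro Ck_add Ck_const Ck_cmult Ck_x Ck_x2 assms)

lemma T_comb:
  assumes Cf: "Ck k f"
  shows "T (\<lambda>t. a + b * of_real t + c * of_real (t^2) + d * f t) x
     = a * T (\<lambda>t. 1) x + b * T (\<lambda>t. of_real t) x + c * T (\<lambda>t. of_real (t^2)) x + d * T f x"
proof -
  have "T (\<lambda>t. a + b * of_real t + c * of_real (t^2) + d * f t) x
      = T (\<lambda>t. a + b * of_real t + c * of_real (t^2)) x + T (\<lambda>t. d * f t) x"
    by (rule PL_add) (intro Ck_add Ck_const Ck_cmult Ck_x Ck_x2 Cf)+
  also have "T (\<lambda>t. a + b * of_real t + c * of_real (t^2)) x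
      = T (\<lambda>t. a + b * of_real t) x + T (\<lambda>t. c * of_real (t^2)) x"
    by (rule PL_add) (intro Ck_add Ck_const Ck_cmult Ck_x Ck_x2)+
  also have "T (\<lambda>t. a + b * of_real t) x = T (\<lambda>t. a) x + T (\<lambda>t. b * of_real t) x"
    by (rule PL_add) (intro Ck_add Ck_const Ck_cmult Ck_x Ck_x2)+
  finally show ?thesis
    by (simp add: PL_const[of a] PL_mult[OF Cf] PL_mult[OF Ck_x] PL_mult[OF Ck_x2] del: of_real_power)
qed

lemma T_real:
  assumes Cu: "Ck k (\<lambda>t. of_real (u t) :: 'a)"
  shows "\<exists>r. T (\<lambda>t. of_real (u t)) x = of_real r"
proof -
  obtain M where M: "M \<ge> 0" "\<And>t. t \<in> unitI \<Longrightarrow> \<bar>u t\<bar> \<le> M"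
    using real_bounded[OF Ck_real_cont[OF Cu]] by blast
  have "nonneg_scalar (T (\<lambda>t. of_real (u t) + of_real M) x)"
  proof (rule PL_pos)
    show "Ck k (\<lambda>t. of_real (u t) + (of_real M :: 'a))" by (intro Ck_add Cu Ck_const)
    show "\<forall>t\<in>unitI. nonneg_scalar (of_real (u t) + (of_real M :: 'a))"
    proof
      fix t assume "t \<in> unitI"
      then have "u t + M \<ge> 0" using M(2)[of t] by linarith
      then show "nonneg_scalar (of_real (u t) + (of_real M :: 'a))"
        unfolding nonneg_scalar_def by (intro exI[of _ "u t + M"]) simp
    qed
  qed
  then obtain r1 where r1: "T (\<lambda>t. of_real (u t) + of_real M) x = of_real r1"
    unfolding nonneg_scalar_def by blast
  have "nonneg_scalar (T (\<lambda>t. 1) x)"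
    by (rule PL_pos[OF Ck_const]) (auto simp: nonneg_scalar_def intro!: exI[of _ 1])
  then obtain r2 where r2: "T (\<lambda>t. 1) x = of_real r2" unfolding nonneg_scalar_def by blast
  have "T (\<lambda>t. of_real (u t) + of_real M) x = T (\<lambda>t. of_real (u t)) x + T (\<lambda>t. of_real M) x"
    by (rule PL_add[OF Cu Ck_const])
  then have "T (\<lambda>t. of_real (u t)) x = of_real (r1 - M * r2)"
    using r1 r2 by (simp add: PL_const[of "of_real M"])
  then show ?thesis by blast
qed

lemma T_one_real: "\<exists>r. T (\<lambda>t. 1) x = of_real r"
proof -
  have "Ck k (\<lambda>t. of_real 1 :: 'a)" by (rule Ck_const)
  from T_real[OF this] show ?thesis by simp
qed

lemma T_x_real: "\<exists>r. T (\<lambda>t. of_real t) x = of_real r"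
  using T_real[OF Ck_x] .

lemma T_x2_real: "\<exists>r. T (\<lambda>t. of_real (t^2)) x = of_real r"
  using T_real[OF Ck_x2] .

lemma T_pos_comb:
  assumes Cu: "Ck k (\<lambda>t. of_real (u t) :: 'a)"
    and nn: "\<forall>t\<in>unitI. \<alpha> + \<beta> * t + \<gamma> * t^2 + \<delta> * u t \<ge> 0"
    and a0: "T (\<lambda>t. 1) x = of_real a0" and a1: "T (\<lambda>t. of_real t) x = of_real a1"
    and a2: "T (\<lambda>t. of_real (t^2)) x = of_real a2" and b: "T (\<lambda>t. of_real (u t)) x = of_real b"
  shows "\<alpha> * a0 + \<beta> * a1 + \<gamma> * a2 + \<delta> * b \<ge> 0"
proof -
  define F where "F = (\<lambda>t. of_real \<alpha> + of_real \<beta> * of_real t + of_real \<gamma> * of_real (t^2) + of_real \<delta> * (of_real (u t) :: 'a))"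
  have CF: "Ck k F" unfolding F_def by (rule Ck_comb[OF Cu])
  have "nonneg_scalar (T F x)"
  proof (rule PL_pos[OF CF], rule ballI)
    fix t assume "t \<in> unitI"
    then have "F t = of_real (\<alpha> + \<beta> * t + \<gamma> * t^2 + \<delta> * u t)" unfolding F_def by simp
    then show "nonneg_scalar (F t)" using nn \<open>t \<in> unitI\<close> unfolding nonneg_scalar_def by blast
  qed
  then obtain r where r: "r \<ge> 0" "T F x = of_real r" unfolding nonneg_scalar_def by blast
  have "T F x = of_real (\<alpha> * a0 + \<beta> * a1 + \<gamma> * a2 + \<delta> * b)"
    unfolding F_def T_comb[OF Cu] a0 a1 a2 b by simp
  with r(2) have "(of_real r :: 'a) = of_real (\<alpha> * a0 + \<beta> * a1 + \<gamma> * a2 + \<delta> * b)" by (rule subst)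
  then have "r = \<alpha> * a0 + \<beta> * a1 + \<gamma> * a2 + \<delta> * b" by (simp only: of_real_eq_iff)
  with r show ?thesis by simp
qed

end


lemma kor_real:
  fixes u :: "real \<Rightarrow> real"
  assumes Cu: "Ck k (\<lambda>t. of_real (u t) :: 'a::real_normed_field)" and ep: "\<epsilon> > 0"
  shows "\<exists>K\<ge>0. \<forall>(T :: (real \<Rightarrow> 'a) \<Rightarrow> real \<Rightarrow> 'a) x. pos_lin_map k T \<longrightarrow> x \<in> unitI \<longrightarrow>
     norm (T (\<lambda>t. of_real (u t)) x - of_real (u x)) \<le> \<epsilon> + K * (norm (T (\<lambda>t. 1) x - 1)
        + norm (T (\<lambda>t. of_real t) x - of_real x) + norm (T (\<lambda>t. of_real (t^2)) x - of_real (x^2)))"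
proof -
  have uc: "continuous_on unitI u" by (rule Ck_real_cont[OF Cu])
  obtain M where M: "M \<ge> 0" "\<And>t. t \<in> unitI \<Longrightarrow> \<bar>u t\<bar> \<le> M"
    using real_bounded[OF uc] by blast
  have "uniformly_continuous_on unitI u" by (rule compact_uniformly_continuous[OF uc compact_Icc])
  then obtain \<delta> where d: "\<delta> > 0" "\<forall>s\<in>unitI. \<forall>t\<in>unitI. dist t s < \<delta> \<longrightarrow> dist (u t) (u s) < \<epsilon>"
    unfolding uniformly_continuous_on_def using ep by blast
  define c where "c = 2*M/\<delta>^2"
  have c0: "c \<ge> 0" using M d by (simp add: c_def)
  have key: "\<bar>u t - u s\<bar> \<le> \<epsilon> + c*(t-s)^2" if st: "s \<in> unitI" "t \<in> unitI" for s t
  proof (cases "\<bar>t - s\<bar> < \<delta>")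
    case True
    then have "\<bar>u t - u s\<bar> < \<epsilon>" using d(2) st by (auto simp: dist_real_def)
    moreover have "c*(t-s)^2 \<ge> 0" using c0 by simp
    ultimately show ?thesis by linarith
  next
    case False
    then have "\<delta> \<le> \<bar>t - s\<bar>" by simp
    then have "\<delta>^2 \<le> \<bar>t-s\<bar>^2" using d(1) by (intro power_mono) auto
    then have "\<delta>^2 \<le> (t-s)^2" by simp
    then have "c*\<delta>^2 \<le> c*(t-s)^2" using c0 by (rule mult_left_mono)
    moreover have "c*\<delta>^2 = 2*M" using d(1) by (simp add: c_def)
    moreover have "\<bar>u t - u s\<bar> \<le> 2*M" using M(2)[OF st(1)] M(2)[OF st(2)] by linarith
    ultimately show ?thesis using ep by linarith
  qed
  define K where "K = M + \<epsilon> + 2*c"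
  have K0: "K \<ge> 0" using M c0 ep by (simp add: K_def)
  have "\<forall>(T :: (real \<Rightarrow> 'a) \<Rightarrow> real \<Rightarrow> 'a) x. pos_lin_map k T \<longrightarrow> x \<in> unitI \<longrightarrow>
     norm (T (\<lambda>t. of_real (u t)) x - of_real (u x)) \<le> \<epsilon> + K * (norm (T (\<lambda>t. 1) x - 1)
        + norm (T (\<lambda>t. of_real t) x - of_real x) + norm (T (\<lambda>t. of_real (t^2)) x - of_real (x^2)))"
  proof (intro allI impI)
    fix T :: "(real \<Rightarrow> 'a) \<Rightarrow> real \<Rightarrow> 'a" and x
    assume PL: "pos_lin_map k T" and xI: "x \<in> unitI"
    obtain a0 where a0: "T (\<lambda>t. 1) x = of_real a0" using T_one_real[OF PL xI] by blast
    obtain a1 where a1: "T (\<lambda>t. of_real t) x = of_real a1" using T_x_real[OF PL xI] by blast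
    obtain a2 where a2: "T (\<lambda>t. of_real (t^2)) x = of_real a2" using T_x2_real[OF PL xI] by blast
    obtain b where b: "T (\<lambda>t. of_real (u t)) x = of_real b" using T_real[OF PL xI Cu] by blast
    define Q where "Q = a2 - 2*x*a1 + x^2*a0"
    have sq: "c*(t-x)^2 = c*t^2 - 2*c*x*t + c*x^2" for t by (simp add: power2_eq_square algebra_simps)
    have p1: "(\<epsilon> + c*x^2 + u x) * a0 + (-2*c*x) * a1 + c * a2 + (-1) * b \<ge> 0"
    proof (rule T_pos_comb[OF PL xI Cu _ a0 a1 a2 b], rule ballI)
      fix t assume "t \<in> unitI"
      then have "\<bar>u t - u x\<bar> \<le> \<epsilon> + c*(t-x)^2" by (rule key[OF xI])
      then have "u t - u x \<le> \<epsilon> + c*(t-x)^2" by linarith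
      then show "0 \<le> \<epsilon> + c * x\<^sup>2 + u x + - 2 * c * x * t + c * t\<^sup>2 + - 1 * u t"
        unfolding sq by linarith
    qed
    have p2: "(\<epsilon> + c*x^2 - u x) * a0 + (-2*c*x) * a1 + c * a2 + 1 * b \<ge> 0"
    proof (rule T_pos_comb[OF PL xI Cu _ a0 a1 a2 b], rule ballI)
      fix t assume "t \<in> unitI"
      then have "\<bar>u t - u x\<bar> \<le> \<epsilon> + c*(t-x)^2" by (rule key[OF xI])
      then have "u x - u t \<le> \<epsilon> + c*(t-x)^2" by linarith
      then show "0 \<le> \<epsilon> + c * x\<^sup>2 - u x + - 2 * c * x * t + c * t\<^sup>2 + 1 * u t"
        unfolding sq by linarith
    qed
    have e1: "(\<epsilon> + c*x^2 + u x) * a0 + (-2*c*x) * a1 + c * a2 + (-1) * b = \<epsilon>*a0 + c*Q - (b - u x*a0)"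
      by (simp add: Q_def algebra_simps)
    have e2: "(\<epsilon> + c*x^2 - u x) * a0 + (-2*c*x) * a1 + c * a2 + 1 * b = \<epsilon>*a0 + c*Q + (b - u x*a0)"
      by (simp add: Q_def algebra_simps)
    have h1: "\<bar>b - u x * a0\<bar> \<le> \<epsilon>*a0 + c*Q" using p1 p2 unfolding e1 e2 by linarith
    define E0 where "E0 = \<bar>a0 - 1\<bar>"
    define E1 where "E1 = \<bar>a1 - x\<bar>"
    define E2 where "E2 = \<bar>a2 - x^2\<bar>"
    have xb: "\<bar>x\<bar> \<le> 1" "x^2 \<le> 1" using xI by (auto simp: abs_le_iff power_le_one)
    have Qe: "Q = (a2 - x^2) - 2*x*(a1 - x) + x^2*(a0 - 1)" by (simp add: Q_def algebra_simps power2_eq_square)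
    have "\<bar>2*x*(a1 - x)\<bar> \<le> 2*E1"
    proof -
      have "\<bar>2*x*(a1 - x)\<bar> = 2*\<bar>x\<bar>*E1" by (simp add: E1_def abs_mult)
      also have "\<dots> \<le> 2*1*E1" using xb by (intro mult_right_mono mult_left_mono) (auto simp: E1_def)
      finally show ?thesis by simp
    qed
    moreover have "\<bar>x^2*(a0 - 1)\<bar> \<le> E0"
    proof -
      have "\<bar>x^2*(a0 - 1)\<bar> = x^2*E0" by (simp add: E0_def abs_mult)
      also have "\<dots> \<le> 1*E0" using xb by (intro mult_right_mono) (auto simp: E0_def)
      finally show ?thesis by simp
    qed
    ultimately have h2: "Q \<le> E0 + 2*E1 + E2" unfolding Qe E2_def by linarith
    have h3: "a0 \<le> 1 + E0" by (simp add: E0_def)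
    have h4: "\<bar>u x * (a0 - 1)\<bar> \<le> M * E0"
      using M(2)[OF xI] by (simp add: abs_mult E0_def mult_right_mono)
    have "\<bar>b - u x\<bar> \<le> \<bar>b - u x * a0\<bar> + \<bar>u x * (a0 - 1)\<bar>"
      by (simp add: algebra_simps abs_triangle_ineq[of "b - u x * a0" "u x * a0 - u x", simplified])
    also have "\<dots> \<le> \<epsilon>*a0 + c*Q + M*E0" using h1 h4 by linarith
    also have "\<dots> \<le> \<epsilon>*(1 + E0) + c*(E0 + 2*E1 + E2) + M*E0"
      using h2 h3 ep c0 M(1) by (intro add_mono mult_left_mono) auto
    also have "\<dots> \<le> \<epsilon> + K * (E0 + E1 + E2)"
    proof -
      have "E0 \<ge> 0" "E1 \<ge> 0" "E2 \<ge> 0" by (auto simp: E0_def E1_def E2_def)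
      then have "0 \<le> M*E1 + M*E2 + \<epsilon>*E1 + \<epsilon>*E2 + c*E0 + c*E2"
        using M(1) ep c0 by (intro add_nonneg_nonneg mult_nonneg_nonneg) auto
      then show ?thesis by (simp add: K_def algebra_simps)
    qed
    finally have fin: "\<bar>b - u x\<bar> \<le> \<epsilon> + K * (E0 + E1 + E2)" .
    have n0: "norm (T (\<lambda>t. 1) x - 1) = E0"
    proof -
      have "(of_real a0 - 1 :: 'a) = of_real (a0 - 1)" by simp
      then show ?thesis unfolding a0 E0_def by (simp only: norm_of_real)
    qed
    have n1: "norm (T (\<lambda>t. of_real t) x - of_real x) = E1"
      unfolding a1 E1_def of_real_diff[symmetric] by (simp only: norm_of_real)
    have n2: "norm (T (\<lambda>t. of_real (t^2)) x - of_real (x^2)) = E2"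
      unfolding a2 E2_def of_real_diff[symmetric] by (simp only: norm_of_real)
    have nb: "norm (T (\<lambda>t. of_real (u t)) x - of_real (u x)) = \<bar>b - u x\<bar>"
      unfolding b of_real_diff[symmetric] by (simp only: norm_of_real)
    show "norm (T (\<lambda>t. of_real (u t)) x - of_real (u x)) \<le> \<epsilon> + K * (norm (T (\<lambda>t. 1) x - 1)
        + norm (T (\<lambda>t. of_real t) x - of_real x) + norm (T (\<lambda>t. of_real (t^2)) x - of_real (x^2)))"
      unfolding n0 n1 n2 nb by (rule fin)
  qed
  with K0 show ?thesis by blast
qed



lemma decomp_complex:
  fixes j :: "'a::real_normed_field"
  assumes jj: "j * j = -1"
  shows "\<exists>re im. bounded_linear (re :: 'a \<Rightarrow> real) \<and> bounded_linear im \<and> (\<forall>z. z = of_real (re z) + of_real (im z) * j)"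
proof -
  define LL where "LL = (\<lambda>p::real\<times>real. of_real (fst p) + of_real (snd p) * j)"
  have span: "\<exists>p. LL p = z" for z
  proof -
    obtain s t where st: "(z - of_real s)^2 + of_real t^2 = 0" using quad_root by blast
    have "(z - of_real s - of_real t * j) * (z - of_real s + of_real t * j) = (z - of_real s)^2 - (of_real t)^2 * (j * j)"
      by (simp add: power2_eq_square algebra_simps)
    also have "\<dots> = 0" using st jj by (simp add: add_eq_0_iff)
    finally have "z - of_real s - of_real t * j = 0 \<or> z - of_real s + of_real t * j = 0" by simp
    then have "z = LL (s, t) \<or> z = LL (s, -t)" by (auto simp: LL_def algebra_simps)
    then show ?thesis by auto
  qed
  have indep: "LL p = 0 \<Longrightarrow> p = 0" for p
  proof -
    obtain x y where p: "p = (x, y)" by fastforce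
    assume l0: "LL p = 0"
    have "y = 0"
    proof (rule ccontr)
      assume y0: "y \<noteq> 0"
      from l0 have "of_real y * j = - of_real x" by (simp add: LL_def p eq_neg_iff_add_eq_0 add.commute)
      then have "j = of_real (- x / y)" using y0 by (simp add: field_simps)
      then have "of_real ((- x / y)^2) = (-1 :: 'a)" using jj by (simp add: power2_eq_square)
      then have "of_real ((- x / y)^2) = (of_real (-1) :: 'a)" by simp
      then have "(- x / y)^2 = -1" by (simp only: of_real_eq_iff)
      moreover have "(- x / y)^2 \<ge> 0" by simp
      ultimately show False by simp
    qed
    with l0 have "x = 0" by (simp add: LL_def p)
    with \<open>y = 0\<close> show ?thesis by (simp add: p zero_prod_def)
  qed
  have ladd: "LL (p + q) = LL p + LL q" for p q by (simp add: LL_def algebra_simps)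
  have lscale: "LL (r *\<^sub>R p) = of_real r * LL p" for r p by (simp add: LL_def algebra_simps)
  have linj: "LL p = LL q \<Longrightarrow> p = q" for p q
  proof -
    assume "LL p = LL q"
    then have "LL (p - q) = 0" using ladd[of "p - q" q] by simp
    then have "p - q = 0" by (rule indep)
    then show "p = q" by simp
  qed
  have "compact (sphere (0::real\<times>real) 1)" by simp
  moreover have "(1,0) \<in> sphere (0::real\<times>real) 1" by simp
  moreover have "continuous_on (sphere 0 1) (\<lambda>p. norm (LL p))" unfolding LL_def by (intro continuous_intros)
  ultimately obtain p0 where p0: "p0 \<in> sphere 0 1" "\<forall>p\<in>sphere 0 1. norm (LL p0) \<le> norm (LL p)"
    using continuous_attains_inf by blast
  define B where "B = norm (LL p0)"
  have Bpos: "B > 0" using p0(1) indep[of p0] by (auto simp: B_def)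
  have below: "B * norm p \<le> norm (LL p)" for p
  proof (cases "p = 0")
    case True then show ?thesis by simp
  next
    case False
    define q where "q = (1 / norm p) *\<^sub>R p"
    have "q \<in> sphere 0 1" using False by (simp add: q_def)
    then have "B \<le> norm (LL q)" using p0 by (simp add: B_def)
    moreover have "p = norm p *\<^sub>R q" using False by (simp add: q_def)
    then have "LL p = of_real (norm p) * LL q" using lscale[of "norm p" q] by simp
    then have "norm (LL p) = norm p * norm (LL q)" by (simp add: norm_mult)
    ultimately show ?thesis by (metis mult.commute mult_left_mono norm_ge_zero)
  qed
  define co where "co = (\<lambda>z. SOME p. LL p = z)"
  have lco: "LL (co z) = z" for z unfolding co_def using span[of z] by (rule someI_ex)
  have coadd: "co (z + w) = co z + co w" for z w by (rule linj) (simp add: lco ladd)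
  have coscale: "co (r *\<^sub>R z) = r *\<^sub>R co z" for r z by (rule linj) (simp add: lco lscale scaleR_conv_of_real)
  have cobd: "norm (co z) \<le> norm z * (1/B)" for z
    using below[of "co z"] Bpos by (simp add: lco field_simps)
  have blco: "bounded_linear co"
    by (rule bounded_linear_intro[OF coadd coscale cobd])
  have "bounded_linear (\<lambda>z. fst (co z))" by (rule bounded_linear_compose[OF bounded_linear_fst blco])
  moreover have "bounded_linear (\<lambda>z. snd (co z))" by (rule bounded_linear_compose[OF bounded_linear_snd blco])
  moreover have "\<forall>z. z = of_real (fst (co z)) + of_real (snd (co z)) * j"
    using lco by (simp add: LL_def)
  ultimately show ?thesis by blast
qed

lemma decomp_real:
  assumes nj: "\<not> (\<exists>j::'a::real_normed_field. j * j = -1)"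
  shows "\<exists>re. bounded_linear (re :: 'a \<Rightarrow> real) \<and> (\<forall>z. z = of_real (re z))"
proof -
  have span: "\<exists>s. z = of_real s" for z :: 'a
  proof -
    obtain s t where st: "(z - of_real s)^2 + of_real t^2 = 0" using quad_root by blast
    have "t = 0"
    proof (rule ccontr)
      assume "t \<noteq> 0"
      then have "((z - of_real s) / of_real t) * ((z - of_real s) / of_real t) = -1"
        using st by (simp add: power2_eq_square field_simps add_eq_0_iff)
      with nj show False by blast
    qed
    with st have "z = of_real s" by simp
    then show ?thesis by blast
  qed
  define re where "re = (\<lambda>z::'a. SOME s. z = of_real s)"
  have rz: "z = of_real (re z)" for z unfolding re_def using span[of z] by (rule someI_ex)
  have radd: "re (z + w) = re z + re w" for z w
  proof -
    have "(of_real (re (z + w)) :: 'a) = of_real (re z + re w)"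
      using rz[of "z+w"] rz[of z] rz[of w] by simp
    then show ?thesis by (simp only: of_real_eq_iff)
  qed
  have rscale: "re (r *\<^sub>R z) = r *\<^sub>R re z" for r z
  proof -
    have "(of_real (re (r *\<^sub>R z)) :: 'a) = of_real (r * re z)"
      using rz[of "r *\<^sub>R z"] rz[of z] by (simp add: scaleR_conv_of_real)
    then show ?thesis by (simp only: of_real_eq_iff real_scaleR_def)
  qed
  have rbd: "norm (re z) \<le> norm z * 1" for z
  proof -
    have "norm z = norm (of_real (re z) :: 'a)" using rz[of z] by simp
    then show ?thesis by simp
  qed
  have "bounded_linear re" by (rule bounded_linear_intro[OF radd rscale rbd])
  with rz show ?thesis by blast
qed

lemma field_decomp:
  "\<exists>(j::'a::real_normed_field) re im. bounded_linear (re :: 'a \<Rightarrow> real) \<and> bounded_linear im \<and> (\<forall>z. z = of_real (re z) + of_real (im z) * j)"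
proof (cases "\<exists>j::'a. j * j = -1")
  case True
  then obtain j :: 'a where "j * j = -1" by blast
  then show ?thesis using decomp_complex by blast
next
  case False
  then obtain re where "bounded_linear (re :: 'a \<Rightarrow> real)" "\<forall>z. z = of_real (re z)"
    using decomp_real by blast
  then show ?thesis
    by (intro exI[of _ 0] exI[of _ re] exI[of _ "\<lambda>z. 0"]) (auto intro: bounded_linear_zero)
qed



definition Eerr :: "((real \<Rightarrow> 'a::real_normed_field) \<Rightarrow> real \<Rightarrow> 'a) \<Rightarrow> real \<Rightarrow> real" where
  "Eerr T x = norm (T (\<lambda>t. 1) x - 1) + norm (T (\<lambda>t. of_real t) x - of_real x)
     + norm (T (\<lambda>t. of_real (t^2)) x - of_real (x^2))"

lemma Eerr_nonneg: "Eerr T x \<ge> 0" by (simp add: Eerr_def)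

lemma main_est:
  fixes f :: "real \<Rightarrow> 'a::real_normed_field"
  assumes Cf: "Ck k f" and ep: "\<epsilon> > 0"
  shows "\<exists>K\<ge>0. \<forall>(T :: (real \<Rightarrow> 'a) \<Rightarrow> real \<Rightarrow> 'a) x. pos_lin_map k T \<longrightarrow> x \<in> unitI \<longrightarrow>
     norm (T f x - f x) \<le> \<epsilon> + K * Eerr T x"
proof -
  obtain j :: 'a and re im where bl: "bounded_linear re" "bounded_linear im"
    and dz: "\<forall>z. z = of_real (re z) + of_real (im z) * j"
    using field_decomp by blast
  define u1 where "u1 = (\<lambda>t. re (f t))"
  define u2 where "u2 = (\<lambda>t. im (f t))"
  have C1: "Ck k (\<lambda>t. of_real (u1 t) :: 'a)" unfolding u1_def
    by (rule Ck_bl[OF bounded_linear_compose[OF bounded_linear_of_real bl(1)] Cf])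
  have C2: "Ck k (\<lambda>t. of_real (u2 t) :: 'a)" unfolding u2_def
    by (rule Ck_bl[OF bounded_linear_compose[OF bounded_linear_of_real bl(2)] Cf])
  have feq: "f = (\<lambda>t. of_real (u1 t) + j * of_real (u2 t))"
    unfolding u1_def u2_def using dz by (auto simp: mult.commute)
  define e' where "e' = \<epsilon> / (1 + norm j)"
  have e'pos: "e' > 0" using ep by (simp add: e'_def add_pos_nonneg)
  obtain K1 where K1: "K1 \<ge> 0" "\<forall>(T :: (real \<Rightarrow> 'a) \<Rightarrow> real \<Rightarrow> 'a) x. pos_lin_map k T \<longrightarrow> x \<in> unitI \<longrightarrow>
     norm (T (\<lambda>t. of_real (u1 t)) x - of_real (u1 x)) \<le> e' + K1 * Eerr T x"
    using kor_real[OF C1 e'pos] unfolding Eerr_def by blast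
  obtain K2 where K2: "K2 \<ge> 0" "\<forall>(T :: (real \<Rightarrow> 'a) \<Rightarrow> real \<Rightarrow> 'a) x. pos_lin_map k T \<longrightarrow> x \<in> unitI \<longrightarrow>
     norm (T (\<lambda>t. of_real (u2 t)) x - of_real (u2 x)) \<le> e' + K2 * Eerr T x"
    using kor_real[OF C2 e'pos] unfolding Eerr_def by blast
  define K where "K = K1 + norm j * K2"
  have "K \<ge> 0" using K1 K2 by (simp add: K_def)
  moreover have "\<forall>(T :: (real \<Rightarrow> 'a) \<Rightarrow> real \<Rightarrow> 'a) x. pos_lin_map k T \<longrightarrow> x \<in> unitI \<longrightarrow>
     norm (T f x - f x) \<le> \<epsilon> + K * Eerr T x"
  proof (intro allI impI)
    fix T :: "(real \<Rightarrow> 'a) \<Rightarrow> real \<Rightarrow> 'a" and x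
    assume PL: "pos_lin_map k T" and xI: "x \<in> unitI"
    let ?A = "T (\<lambda>t. of_real (u1 t)) x - of_real (u1 x)"
    let ?B = "T (\<lambda>t. of_real (u2 t)) x - of_real (u2 x)"
    have "T f x = T (\<lambda>t. of_real (u1 t)) x + T (\<lambda>t. j * of_real (u2 t)) x"
      unfolding feq by (rule PL_add[OF PL xI C1 Ck_cmult[OF C2]])
    also have "T (\<lambda>t. j * of_real (u2 t)) x = j * T (\<lambda>t. of_real (u2 t)) x"
      by (rule PL_mult[OF PL xI C2])
    finally have "T f x - f x = ?A + j * ?B"
      by (subst (2) feq) (simp add: algebra_simps)
    then have "norm (T f x - f x) \<le> norm ?A + norm j * norm ?B"
      by (metis norm_mult norm_triangle_ineq)
    also have "\<dots> \<le> (e' + K1 * Eerr T x) + norm j * (e' + K2 * Eerr T x)"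
      using K1(2) K2(2) PL xI by (intro add_mono mult_left_mono) auto
    also have "\<dots> = e' * (1 + norm j) + K * Eerr T x" by (simp add: K_def algebra_simps)
    also have "e' * (1 + norm j) = \<epsilon>"
    proof -
      have "1 + norm j > 0" by (simp add: add_pos_nonneg)
      then show ?thesis by (simp add: e'_def)
    qed
    finally show "norm (T f x - f x) \<le> \<epsilon> + K * Eerr T x" .
  qed
  ultimately show ?thesis by blast
qed

lemma conv:
  fixes T :: "nat \<Rightarrow> (real \<Rightarrow> 'a::real_normed_field) \<Rightarrow> real \<Rightarrow> 'a"
  assumes PL: "\<forall>n. pos_lin_map k (T n)" and S: "S \<subseteq> unitI"
    and tf: "\<forall>g\<in>test_funs. uniform_limit S (\<lambda>n. T n g) g sequentially"
    and Cf: "Ck k f"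
  shows "uniform_limit S (\<lambda>n. T n f) f sequentially"
proof (rule uniform_limitI)
  fix e :: real assume e: "e > 0"
  obtain K where K: "K \<ge> 0" "\<forall>(T :: (real \<Rightarrow> 'a) \<Rightarrow> real \<Rightarrow> 'a) x. pos_lin_map k T \<longrightarrow> x \<in> unitI \<longrightarrow>
     norm (T f x - f x) \<le> e/2 + K * Eerr T x"
    using main_est[OF Cf, of "e/2"] e by auto
  define \<eta> where "\<eta> = e / (2 * (3*K + 1))"
  have eta: "\<eta> > 0" using e K by (simp add: \<eta>_def)
  have g1: "\<forall>\<^sub>F n in sequentially. \<forall>x\<in>S. dist (T n (\<lambda>t. 1) x) 1 < \<eta>"
    using uniform_limitD[OF tf[rule_format, of "\<lambda>t. 1"] eta] by (simp add: test_funs_def)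
  have g2: "\<forall>\<^sub>F n in sequentially. \<forall>x\<in>S. dist (T n (\<lambda>t. of_real t) x) (of_real x) < \<eta>"
    using uniform_limitD[OF tf[rule_format, of "\<lambda>t. of_real t"] eta] by (simp add: test_funs_def)
  have g3: "\<forall>\<^sub>F n in sequentially. \<forall>x\<in>S. dist (T n (\<lambda>t. of_real (t^2)) x) (of_real (x^2)) < \<eta>"
    using uniform_limitD[OF tf[rule_format, of "\<lambda>t. of_real (t^2)"] eta] by (simp add: test_funs_def)
  show "\<forall>\<^sub>F n in sequentially. \<forall>x\<in>S. dist (T n f x) (f x) < e"
    using g1 g2 g3
  proof eventually_elim
    case (elim n)
    show ?case
    proof
      fix x assume xS: "x \<in> S"
      have "Eerr (T n) x < 3 * \<eta>" using elim xS unfolding Eerr_def dist_norm by fastforce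
      then have "K * Eerr (T n) x \<le> K * (3 * \<eta>)" using K(1) by (intro mult_left_mono) auto
      also have "\<dots> < e/2"
      proof -
        have "K * (3 * \<eta>) = e/2 * (3*K / (3*K + 1))" using K(1) by (simp add: \<eta>_def field_simps)
        also have "\<dots> < e/2 * 1" using e K(1) by (intro mult_strict_left_mono) auto
        finally show ?thesis by simp
      qed
      finally have "K * Eerr (T n) x < e/2" .
      moreover have "norm (T n f x - f x) \<le> e/2 + K * Eerr (T n) x"
        using K(2) PL S xS by blast
      ultimately show "dist (T n f x) (f x) < e" by (simp add: dist_norm)
    qed
  qed
qed

theorem mainTheorem10:
  fixes k :: enat
    and T :: "nat \<Rightarrow> (real \<Rightarrow> 'a::real_normed_field) \<Rightarrow> real \<Rightarrow> 'a"
  assumes "\<forall>n. pos_lin_map k (T n)"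
  shows "((\<forall>g\<in>test_funs. \<forall>x\<in>unitI. (\<lambda>n. T n g x) \<longlonglongrightarrow> g x) \<longrightarrow>
            (\<forall>f. Ck k f \<longrightarrow> (\<forall>x\<in>unitI. (\<lambda>n. T n f x) \<longlonglongrightarrow> f x)))
       \<and> ((\<forall>g\<in>test_funs. uniform_limit unitI (\<lambda>n. T n g) g sequentially) \<longrightarrow>
            (\<forall>f. Ck k f \<longrightarrow> uniform_limit unitI (\<lambda>n. T n f) f sequentially))"
proof (intro conjI impI allI ballI)
  fix f :: "real \<Rightarrow> 'a" and x :: real
  assume h: "\<forall>g\<in>test_funs. \<forall>x\<in>unitI. (\<lambda>n. T n g x) \<longlonglongrightarrow> g x" and Cf: "Ck k f" and xI: "x \<in> unitI"
  have h': "\<forall>g\<in>test_funs. uniform_limit {x} (\<lambda>n. T n g) g sequentially"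
    using h xI by simp
  have sub: "{x} \<subseteq> unitI" using xI by simp
  have "uniform_limit {x} (\<lambda>n. T n f) f sequentially"
    using assms sub h' Cf by (rule conv)
  then show "(\<lambda>n. T n f x) \<longlonglongrightarrow> f x" by simp
next
  fix f :: "real \<Rightarrow> 'a"
  assume h: "\<forall>g\<in>test_funs. uniform_limit unitI (\<lambda>n. T n g) g sequentially" and Cf: "Ck k f"
  show "uniform_limit unitI (\<lambda>n. T n f) f sequentially"
    by (rule conv[OF assms order_refl h Cf])
qed



end
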